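(* Let $\sigma\in(\tfrac12,1)$ be fixed. There is a constant $B=B(\sigma)>0$ such that for every prime $p$ and every real $k>0$: (i) $\displaystyle\sum_{\nu\ge0}\frac{d_{k/2}(p^\nu)^2}{p^{2\nu\sigma}}=I_0\Big(\frac{k}{p^\sigma}\Big)\exp\Big\{E_1\Big\}$ with $|E_1|\le B\,k/p^{2\sigma}$; (ii) if moreover $p\le k^{1/\sigma}$, then $\displaystyle\sum_{\nu\ge0}\frac{d_{k/2}(p^\nu)^2}{p^{2\nu\sigma}}=\exp\{E_2\}$ with $|E_2|\le B\,k/p^{\sigma}$.
   Context: For real $z>0$, $d_z(n)$ is the generalized divisor function, defined by $\zeta(s)^z=\sum_{n\ge1}d_z(n)n^{-s}$ ($\Re s>1$); it is multiplicative with $d_z(p^\nu)=\frac{\Gamma(z+\nu)}{\Gamma(z)\,\nu!}$. $I_0(t):=\int_0^1\exp(t\cos(2\pi\theta))\,d\theta=\sum_{n\ge0}\frac{(t/2)^{2n}}{(n!)^2}$ is the modified Bessel function of order $0$. *)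

theory Defs
  imports "HOL-Analysis.Analysis" "HOL-Computational_Algebra.Primes"
begin

definition gen_divisor :: "real \<Rightarrow> nat \<Rightarrow> real" where
  "gen_divisor z n = (\<Prod>p\<in>prime_factors n.
      Gamma (z + real (multiplicity p n)) / (Gamma z * fact (multiplicity p n)))"

definition bessel_I0 :: "real \<Rightarrow> real" where
  "bessel_I0 t = (\<Sum>n. (t / 2) ^ (2 * n) / (fact n)^2)"

end

theory Submission
  imports Defs
begin


lemma series_has_integral:
  fixes g :: "nat \<Rightarrow> real \<Rightarrow> complex"
  assumes bd: "\<And>i x. x \<in> {a..b} \<Longrightarrow> norm (g i x) \<le> M i" and M: "summable M"
    and cont: "\<And>i. continuous_on {a..b} (g i)"
    and I: "\<And>i. (g i has_integral I i) {a..b}"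
  shows "I sums integral {a..b} (\<lambda>x. \<Sum>i. g i x)"
    and "((\<lambda>x. \<Sum>i. g i x) has_integral (\<Sum>i. I i)) {a..b}"
proof -
  have u: "uniform_limit {a..b} (\<lambda>n x. \<Sum>i<n. g i x) (\<lambda>x. \<Sum>i. g i x) sequentially"
    by (rule Weierstrass_m_test[OF bd M])
  have c: "continuous_on {a..b} (\<lambda>x. \<Sum>i<n. g i x)" for n
    by (intro continuous_intros cont)
  obtain K J where K: "\<And>n. ((\<lambda>x. \<Sum>i<n. g i x) has_integral K n) {a..b}"
    and J: "((\<lambda>x. \<Sum>i. g i x) has_integral J) {a..b}" and lim: "K \<longlonglongrightarrow> J"
    by (rule uniform_limit_integral[OF u c]) auto
  have "K = (\<lambda>n. \<Sum>i<n. I i)"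
    using has_integral_unique[OF K has_integral_sum[of "{..<_}" g I, OF _ I]] by auto
  then have "I sums J" using lim unfolding sums_def by simp
  then show "I sums integral {a..b} (\<lambda>x. \<Sum>i. g i x)" using J integral_unique by metis
  then show "((\<lambda>x. \<Sum>i. g i x) has_integral (\<Sum>i. I i)) {a..b}"
    using J \<open>I sums J\<close> sums_unique by metis
qed

lemma orth:
  fixes j :: int
  shows "((\<lambda>t. cis (2*pi*j*t)) has_integral (if j = 0 then 1 else 0)) {0..1}"
proof (cases "j = 0")
  case True then show ?thesis using has_integral_const_real[of "1::complex" 0 1] by simp
next
  case False
  define A where "A = \<i> * complex_of_real (2*pi*j)"
  have A0: "A \<noteq> 0" using False by (simp add: A_def)
  have ce: "cis (2*pi*j*t) = exp (t *\<^sub>R A)" for t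
    by (simp add: A_def cis_conv_exp scaleR_conv_of_real mult_ac)
  define f where "f t = exp (t *\<^sub>R A) / A" for t :: real
  have d: "(f has_vector_derivative cis (2*pi*j*t)) (at t within {0..1})" for t
    unfolding f_def ce
    using has_vector_derivative_divide[OF exp_scaleR_has_vector_derivative_right[of A t "{0..1}"], of A] A0
    by simp
  have "exp (1 *\<^sub>R A) = 1"
    by (simp add: A_def exp_eq_1)
  then have "f 1 - f 0 = 0"
    unfolding f_def by simp
  show ?thesis using fundamental_theorem_of_calculus[of 0 1 f "\<lambda>t. cis (2*pi*j*t)"] d \<open>f 1 - f 0 = 0\<close> False
    by auto
qed

lemma coeff_integral:
  fixes c :: "nat \<Rightarrow> real"
  assumes sc: "summable (\<lambda>n. \<bar>c n\<bar>)"
  shows "((\<lambda>t. (\<Sum>m. complex_of_real (c m) * cis (2*pi*m*t)) * cis (-(2*pi*n*t)))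
           has_integral complex_of_real (c n)) {0..1}"
proof -
  define g where "g m t = complex_of_real (c m) * cis (2*pi*(int m - int n)*t)" for m t
  define I where "I m = (if m = n then complex_of_real (c m) else 0)" for m
  have gI: "(g m has_integral I m) {0..1}" for m
    using has_integral_mult_right[OF orth[of "int m - int n"], of "complex_of_real (c m)"]
    unfolding g_def I_def by (cases "m = n") simp_all
  have bd: "norm (g m t) \<le> \<bar>c m\<bar>" for m t
    by (simp add: g_def norm_mult)
  have cont: "continuous_on {0..1} (g m)" for m
    unfolding g_def by (intro continuous_intros)
  have "((\<lambda>t. \<Sum>m. g m t) has_integral (\<Sum>m. I m)) {0..1}"
    by (rule series_has_integral(2)[OF bd sc cont gI])
  moreover have "(\<Sum>m. I m) = complex_of_real (c n)"
    using sums_single[of n "\<lambda>m. complex_of_real (c m)"] unfolding I_def by (simp add: sums_iff)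
  moreover have "(\<Sum>m. g m t) = (\<Sum>m. complex_of_real (c m) * cis (2*pi*m*t)) * cis (-(2*pi*n*t))" for t
  proof -
    have s: "summable (\<lambda>m. complex_of_real (c m) * cis (2*pi*m*t))"
      by (rule summable_norm_cancel, rule summable_comparison_test[OF _ sc]) (auto simp: norm_mult)
    have "g m t = complex_of_real (c m) * cis (2*pi*m*t) * cis (-(2*pi*n*t))" for m
      by (simp add: g_def mult.assoc cis_mult algebra_simps)
    then show ?thesis using suminf_mult2[OF s] by simp
  qed
  ultimately show ?thesis by simp
qed

lemma parseval:
  fixes c :: "nat \<Rightarrow> real"
  assumes sc: "summable (\<lambda>n. \<bar>c n\<bar>)"
  defines "F \<equiv> \<lambda>t. (\<Sum>m. complex_of_real (c m) * cis (2*pi*m*t))"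
  shows "summable (\<lambda>n. (c n)^2)"
    and "((\<lambda>t. (cmod (F t))^2) has_integral (\<Sum>n. (c n)^2)) {0..1}"
proof -
  have s: "summable (\<lambda>m. complex_of_real (c m) * cis (2*pi*m*t))" for t
    by (rule summable_norm_cancel, rule summable_comparison_test[OF _ sc]) (auto simp: norm_mult)
  have Fb: "cmod (F t) \<le> (\<Sum>n. \<bar>c n\<bar>)" for t
  proof -
    have "cmod (F t) \<le> (\<Sum>n. norm (complex_of_real (c n) * cis (2*pi*n*t)))"
      unfolding F_def by (rule summable_norm, rule summable_comparison_test[OF _ sc]) (auto simp: norm_mult)
    then show ?thesis by (simp add: norm_mult)
  qed
  have Fc: "continuous_on {0..1} F"
  proof -
    have "uniform_limit {0..1} (\<lambda>n t. \<Sum>i<n. complex_of_real (c i) * cis (2*pi*i*t)) F sequentially"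
      unfolding F_def by (rule Weierstrass_m_test[OF _ sc]) (simp add: norm_mult)
    then show ?thesis
      by (rule uniform_limit_theorem[rotated]) (auto intro!: always_eventually continuous_intros)
  qed
  define g where "g n t = complex_of_real (c n) * (F t * cis (-(2*pi*n*t)))" for n t
  have gI: "(g n has_integral (complex_of_real (c n) * complex_of_real (c n))) {0..1}" for n
    unfolding g_def by (rule has_integral_mult_right, unfold F_def, rule coeff_integral[OF sc])
  have bd: "norm (g n t) \<le> \<bar>c n\<bar> * (\<Sum>n. \<bar>c n\<bar>)" for n t
    unfolding g_def norm_mult using Fb[of t] by (simp add: mult_left_mono)
  have sM: "summable (\<lambda>n. \<bar>c n\<bar> * (\<Sum>n. \<bar>c n\<bar>))"
    by (rule summable_mult2[OF sc])
  have cont: "continuous_on {0..1} (g n)" for n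
    unfolding g_def by (intro continuous_intros Fc)
  have S: "(\<lambda>n. complex_of_real (c n) * complex_of_real (c n)) sums integral {0..1} (\<lambda>t. \<Sum>n. g n t)"
    and H: "((\<lambda>t. \<Sum>n. g n t) has_integral (\<Sum>n. complex_of_real (c n) * complex_of_real (c n))) {0..1}"
    using series_has_integral[OF bd sM cont gI] by auto
  have eq: "(\<Sum>n. g n t) = complex_of_real ((cmod (F t))^2)" for t
  proof -
    have "(\<lambda>n. cnj (complex_of_real (c n) * cis (2*pi*n*t))) sums cnj (F t)"
      using sums_cnj[THEN iffD2, OF summable_sums[OF s[of t]]] unfolding F_def by simp
    then have "(\<lambda>n. complex_of_real (c n) * cis (-(2*pi*n*t))) sums cnj (F t)"
      by (simp add: cis_cnj)
    then have "(\<lambda>n. F t * (complex_of_real (c n) * cis (-(2*pi*n*t)))) sums (F t * cnj (F t))"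
      by (rule sums_mult)
    then have "(\<lambda>n. g n t) sums (F t * cnj (F t))"
      by (simp add: g_def mult_ac)
    then show ?thesis by (metis sums_unique complex_norm_square)
  qed
  have cs: "(\<lambda>n. complex_of_real ((c n)^2)) sums integral {0..1} (\<lambda>t. \<Sum>n. g n t)"
    using S by (simp add: power2_eq_square)
  then have "summable (\<lambda>n. complex_of_real ((c n)^2))" by (auto simp: sums_iff)
  then show sc2: "summable (\<lambda>n. (c n)^2)" by (metis summable_of_real_iff)
  have "((\<lambda>t. complex_of_real ((cmod (F t))^2)) has_integral complex_of_real (\<Sum>n. (c n)^2)) {0..1}"
  proof -
    have e2: "(\<Sum>n. complex_of_real (c n) * complex_of_real (c n)) = complex_of_real (\<Sum>n. (c n)^2)"
      using suminf_of_real[OF sc2, where 'a=complex] by (simp add: power2_eq_square)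
    show ?thesis using H unfolding eq e2 .
  qed
  from has_integral_linear[OF this bounded_linear_Re]
  show "((\<lambda>t. (cmod (F t))^2) has_integral (\<Sum>n. (c n)^2)) {0..1}" by (simp add: o_def)
qed


lemma cis_pow: "cis (2*pi*t) ^ n = cis (2*pi*real n*t)"
  by (subst Complex.DeMoivre) (simp add: mult_ac)

lemma Fser:
  fixes x z t :: real
  assumes "0 \<le> x" "x < 1"
  shows "(\<lambda>n. complex_of_real (pochhammer z n / fact n * x^n) * cis (2*pi*n*t)) sums
           ((1 - complex_of_real x * cis (2*pi*t)) powr (- complex_of_real z))"
proof -
  have nw: "norm (- (complex_of_real x * cis (2*pi*t))) < 1" using assms by (simp add: norm_mult)
  have "((- complex_of_real z) gchoose n) * (- (complex_of_real x * cis (2*pi*t)))^n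
        = complex_of_real (pochhammer z n / fact n * x^n) * cis (2*pi*n*t)" for n
  proof -
    have 1: "((- complex_of_real z) gchoose n) = (-1)^n * complex_of_real (pochhammer z n) / fact n"
      by (simp add: gbinomial_pochhammer pochhammer_of_real)
    have 2: "(- (complex_of_real x * cis (2*pi*t)))^n = (-1)^n * (complex_of_real (x^n) * cis (2*pi*n*t))"
      by (subst power_minus) (simp only: power_mult_distrib cis_pow of_real_power)
    have 3: "((-1::complex)^n * (-1)^n) = 1"
      by (simp flip: power_mult_distrib)
    show ?thesis unfolding 1 2
      by (simp add: field_simps 3)
  qed
  then show ?thesis using gen_binomial_complex[OF nw, of "- complex_of_real z"] by simp
qed

lemma Gser:
  fixes a t :: real
  shows "(\<lambda>n. complex_of_real (a^n / fact n) * cis (2*pi*n*t)) sums exp (complex_of_real a * cis (2*pi*t))"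
proof -
  have "(complex_of_real a * cis (2*pi*t))^n /\<^sub>R fact n = complex_of_real (a^n / fact n) * cis (2*pi*n*t)" for n
    unfolding power_mult_distrib cis_pow by (simp add: scaleR_conv_of_real divide_inverse mult.assoc mult.commute)
  then show ?thesis using exp_converges[of "complex_of_real a * cis (2*pi*t)"] by simp
qed


lemma ptw:
  fixes x k t :: real
  assumes x0: "0 \<le> x" and x1: "x \<le> 3/4" and k: "k > 0"
  defines "w \<equiv> complex_of_real x * cis (2*pi*t)"
  shows "(cmod ((1 - w) powr (- complex_of_real (k/2))))^2 \<le> exp (4*k*x^2) * (cmod (exp (complex_of_real (k*x/2) * cis (2*pi*t))))^2"
    and "exp (-(4*k*x^2)) * (cmod (exp (complex_of_real (k*x/2) * cis (2*pi*t))))^2 \<le> (cmod ((1 - w) powr (- complex_of_real (k/2))))^2"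
proof -
  have nw: "norm w = x" using x0 by (simp add: w_def norm_mult)
  have w1: "1 - w \<noteq> 0" using nw x1 by auto
  define D where "D = Ln (1 - w) + w"
  have "cmod (ln (1 + (- w)) - (- w)) \<le> (cmod (- w))^2 / (1 - cmod (- w))"
    by (rule Ln_approx_linear) (use nw x1 in simp)
  then have Db: "cmod D \<le> x^2 / (1 - x)" using nw by (simp add: D_def)
  also have "\<dots> \<le> 4 * x^2"
  proof -
    have "x * (4 * x\<^sup>2) \<le> 3 * x\<^sup>2" using mult_right_mono[of "x*4" 3 "x^2"] x1 by (simp add: mult_ac)
    then show ?thesis using x1 x0 by (simp add: field_simps)
  qed
  finally have ReD: "\<bar>Re D\<bar> \<le> 4 * x^2" using abs_Re_le_cmod order_trans by blast
  have ReD': "Re D = ln (cmod (1 - w)) + Re w" using w1 by (simp add: D_def)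
  have A: "(cmod ((1 - w) powr (- complex_of_real (k/2))))^2 = exp (- k * ln (cmod (1 - w)))"
  proof -
    have "cmod ((1 - w) powr (- complex_of_real (k/2))) = cmod (1 - w) powr (- (k/2))"
      by (simp add: norm_powr_real_powr')
    also have "\<dots> = exp (- (k/2) * ln (cmod (1 - w)))" using w1 by (simp add: powr_def)
    finally show ?thesis by (simp add: power2_eq_square flip: exp_add)
  qed
  have B: "(cmod (exp (complex_of_real (k*x/2) * cis (2*pi*t))))^2 = exp (k * Re w)"
    by (simp add: w_def power2_eq_square flip: exp_add)
  have AB: "(cmod ((1 - w) powr (- complex_of_real (k/2))))^2 = exp (- (k * Re D)) * (cmod (exp (complex_of_real (k*x/2) * cis (2*pi*t))))^2"
    unfolding A B ReD' by (simp flip: exp_add add: algebra_simps)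
  have "\<bar>k * Re D\<bar> \<le> 4*k*x^2" using ReD k by (simp add: abs_mult)
  then have e1: "exp (- (k * Re D)) \<le> exp (4*k*x^2)" and e2: "exp (-(4*k*x^2)) \<le> exp (- (k * Re D))"
    by auto
  show "(cmod ((1 - w) powr (- complex_of_real (k/2))))^2 \<le> exp (4*k*x^2) * (cmod (exp (complex_of_real (k*x/2) * cis (2*pi*t))))^2"
    unfolding AB by (rule mult_right_mono[OF e1]) simp
  show "exp (-(4*k*x^2)) * (cmod (exp (complex_of_real (k*x/2) * cis (2*pi*t))))^2 \<le> (cmod ((1 - w) powr (- complex_of_real (k/2))))^2"
    unfolding AB by (rule mult_right_mono[OF e2]) simp
qed
lemma gd_prime_power:
  assumes "prime (p::nat)" "z > 0"
  shows "gen_divisor z (p ^ n) = pochhammer z n / fact n"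
proof (cases "n = 0")
  case True
  then show ?thesis by (simp add: gen_divisor_def)
next
  case False
  have "prime_factors (p ^ n) = {p}" using assms False by (simp add: prime_factorization_prime_power)
  moreover have "multiplicity p (p ^ n) = n" using assms by (simp add: multiplicity_prime_power)
  moreover have "z \<notin> \<int>\<^sub>\<le>\<^sub>0" using assms by (auto elim!: nonpos_Ints_cases)
  ultimately show ?thesis by (simp add: gen_divisor_def pochhammer_Gamma)
qed

theorem lemma2p1:
  fixes \<sigma> :: real
  assumes "1/2 < \<sigma>" and "\<sigma> < 1"
  shows "\<exists>B>0. \<forall>(p::nat) (k::real). prime p \<longrightarrow> k > 0 \<longrightarrow>
    summable (\<lambda>\<nu>. (gen_divisor (k/2) (p ^ \<nu>))^2 / real p powr (2 * real \<nu> * \<sigma>)) \<and>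
    (\<exists>E1. (\<Sum>\<nu>. (gen_divisor (k/2) (p ^ \<nu>))^2 / real p powr (2 * real \<nu> * \<sigma>))
            = bessel_I0 (k / real p powr \<sigma>) * exp E1
          \<and> \<bar>E1\<bar> \<le> B * k / real p powr (2 * \<sigma>)) \<and>
    (real p \<le> k powr (1 / \<sigma>) \<longrightarrow>
      (\<exists>E2. (\<Sum>\<nu>. (gen_divisor (k/2) (p ^ \<nu>))^2 / real p powr (2 * real \<nu> * \<sigma>))
              = exp E2
            \<and> \<bar>E2\<bar> \<le> B * k / real p powr \<sigma>))"
proof (rule exI[of _ 5], intro conjI allI impI)
  fix p :: nat and k :: real
  assume pp: "prime p" and k: "k > 0"
  define y where "y = real p powr \<sigma>"
  define x where "x = 1 / y"
  have p2: "real p \<ge> 2" using prime_ge_2_nat[OF pp] by simp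
  have y0: "y > 0" using p2 by (simp add: y_def)
  have "y \<ge> 2 powr \<sigma>" unfolding y_def using p2 assms by (intro powr_mono2) auto
  moreover have "2 powr \<sigma> \<ge> 2 powr (1/2)" using assms by (intro powr_mono) auto
  moreover have "(2::real) powr (1/2) = sqrt 2" by (simp add: powr_half_sqrt)
  moreover have "sqrt 2 \<ge> 4/3" by (rule real_le_rsqrt) (simp add: power2_eq_square)
  ultimately have y43: "y \<ge> 4/3" by linarith
  have x0: "x > 0" using y0 by (simp add: x_def)
  have x1: "x \<le> 3/4" using y43 y0 by (simp add: x_def field_simps)
  define c where "c n = pochhammer (k/2) n / fact n * x^n" for n
  define d where "d n = (k*x/2)^n / fact n" for n
  have c0: "c n \<ge> 0" for n using k x0 by (simp add: c_def pochhammer_pos less_imp_le)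
  have d0: "d n \<ge> 0" for n using k x0 by (simp add: d_def)
  have termq: "(gen_divisor (k/2) (p ^ \<nu>))^2 / real p powr (2 * real \<nu> * \<sigma>) = (c \<nu>)^2" for \<nu>
  proof -
    have "real p powr (2 * real \<nu> * \<sigma>) = y ^ (2*\<nu>)"
      unfolding y_def using y0 p2
      by (simp add: powr_powr flip: powr_realpow) (simp add: mult_ac)
    then show ?thesis using y0
      by (simp add: gd_prime_power[OF pp] k c_def x_def power_mult_distrib power_divide
          power_mult[symmetric] mult_ac)
  qed
  have fun_eq: "(\<lambda>\<nu>. (gen_divisor (k/2) (p ^ \<nu>))^2 / real p powr (2 * real \<nu> * \<sigma>)) = (\<lambda>\<nu>. (c \<nu>)^2)"
    using termq by auto
  have Fs: "(\<lambda>n. complex_of_real (c n) * cis (2*pi*n*t)) sums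
           ((1 - complex_of_real x * cis (2*pi*t)) powr (- complex_of_real (k/2)))" for t
    unfolding c_def by (rule Fser) (use x0 x1 in auto)
  have Gs: "(\<lambda>n. complex_of_real (d n) * cis (2*pi*n*t)) sums exp (complex_of_real (k*x/2) * cis (2*pi*t))" for t
    unfolding d_def by (rule Gser)
  have sc: "summable (\<lambda>n. \<bar>c n\<bar>)"
  proof -
    have "summable (\<lambda>n. complex_of_real (c n))" using Fs[of 0] by (simp add: sums_iff)
    then show ?thesis using c0 by (simp add: summable_of_real_iff)
  qed
  have sd: "summable (\<lambda>n. \<bar>d n\<bar>)"
  proof -
    have "summable (\<lambda>n. complex_of_real (d n))" using Gs[of 0] by (simp add: sums_iff)
    then show ?thesis using d0 by (simp add: summable_of_real_iff)
  qed
  define S where "S = (\<Sum>n. (c n)^2)"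
  define I where "I = (\<Sum>n. (d n)^2)"
  have sc2: "summable (\<lambda>n. (c n)^2)" by (rule parseval(1)[OF sc])
  have sd2: "summable (\<lambda>n. (d n)^2)" by (rule parseval(1)[OF sd])
  define W where "W t = complex_of_real x * cis (2*pi*t)" for t
  define G where "G t = exp (complex_of_real (k*x/2) * cis (2*pi*t))" for t
  have FS: "((\<lambda>t. (cmod ((1 - W t) powr (- complex_of_real (k/2))))^2) has_integral S) {0..1}"
    using parseval(2)[OF sc] Fs unfolding S_def W_def by (simp add: sums_iff)
  have GI: "((\<lambda>t. (cmod (G t))^2) has_integral I) {0..1}"
    using parseval(2)[OF sd] Gs unfolding I_def G_def by (simp add: sums_iff)
  define \<delta> where "\<delta> = 4*k*x^2"
  have up: "S \<le> exp \<delta> * I"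
    by (rule has_integral_le[OF FS has_integral_mult_right[OF GI]])
       (use ptw(1)[OF less_imp_le[OF x0] x1 k] in \<open>auto simp: \<delta>_def W_def G_def\<close>)
  have lo: "exp (-\<delta>) * I \<le> S"
    by (rule has_integral_le[OF has_integral_mult_right[OF GI] FS])
       (use ptw(2)[OF less_imp_le[OF x0] x1 k] in \<open>auto simp: \<delta>_def W_def G_def\<close>)
  have I1: "I \<ge> 1"
  proof -
    have "sum (\<lambda>n. (d n)^2) {0} \<le> I"
      unfolding I_def by (rule sum_le_suminf[OF sd2]) auto
    then show ?thesis by (simp add: d_def)
  qed
  have Iup: "I \<le> exp (k*x)"
  proof -
    have "I \<le> Henstock_Kurzweil_Integration.content {0..1::real} *\<^sub>R exp (k*x)"
    proof (rule has_integral_le[OF GI has_integral_const_real])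
      fix t :: real
      have "(cmod (G t))^2 = exp (k * x * cos (2*pi*t))"
        by (simp add: G_def power2_eq_square cos_of_real flip: exp_add)
      also have "\<dots> \<le> exp (k*x)"
        using k x0 by (simp add: mult_le_cancel_left_pos)
      finally show "(cmod (G t))^2 \<le> exp (k*x)" .
    qed
    then show ?thesis by simp
  qed
  have Spos: "S > 0" using lo I1 by (smt (verit) exp_gt_zero mult_pos_pos)
  define E1 where "E1 = ln (S / I)"
  have SE1: "S = I * exp E1" using Spos I1 by (simp add: E1_def)
  have E1b: "\<bar>E1\<bar> \<le> \<delta>"
  proof -
    have "S / I \<le> exp \<delta>" using up I1 by (simp add: divide_le_eq mult.commute)
    then have "ln (S / I) \<le> ln (exp \<delta>)" using Spos I1 by (subst ln_le_cancel_iff) auto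
    then have a: "E1 \<le> \<delta>" unfolding E1_def by simp
    have "exp (-\<delta>) \<le> S / I" using lo I1 by (simp add: le_divide_eq)
    then have "ln (exp (-\<delta>)) \<le> ln (S / I)" using Spos I1 by (subst ln_le_cancel_iff) auto
    then have b: "-\<delta> \<le> E1" unfolding E1_def by simp
    from a b show ?thesis by auto
  qed
  have y2: "real p powr (2 * \<sigma>) = y^2"
    unfolding y_def using p2 by (simp add: power2_eq_square flip: powr_add)
  have x2: "x^2 = 1 / y^2" by (simp add: x_def power_divide)
  have bes: "bessel_I0 (k / real p powr \<sigma>) = I"
    unfolding bessel_I0_def I_def d_def
    by (simp add: x_def y_def power_mult power_divide power2_eq_square mult_ac)
  show "summable (\<lambda>\<nu>. (gen_divisor (k/2) (p ^ \<nu>))^2 / real p powr (2 * real \<nu> * \<sigma>))"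
    unfolding fun_eq by (rule sc2)
  show "\<exists>E1. (\<Sum>\<nu>. (gen_divisor (k/2) (p ^ \<nu>))^2 / real p powr (2 * real \<nu> * \<sigma>))
            = bessel_I0 (k / real p powr \<sigma>) * exp E1
          \<and> \<bar>E1\<bar> \<le> 5 * k / real p powr (2 * \<sigma>)"
  proof (intro exI conjI)
    show "(\<Sum>\<nu>. (gen_divisor (k/2) (p ^ \<nu>))^2 / real p powr (2 * real \<nu> * \<sigma>))
            = bessel_I0 (k / real p powr \<sigma>) * exp E1"
      unfolding fun_eq bes S_def[symmetric] by (rule SE1)
    have "\<delta> \<le> 5 * k * x^2" using k x0 by (simp add: \<delta>_def)
    also have "\<dots> = 5 * k / real p powr (2 * \<sigma>)" by (simp add: y2 x2)
    finally show "\<bar>E1\<bar> \<le> 5 * k / real p powr (2 * \<sigma>)" using E1b by linarith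
  qed
  show "\<exists>E2. (\<Sum>\<nu>. (gen_divisor (k/2) (p ^ \<nu>))^2 / real p powr (2 * real \<nu> * \<sigma>))
              = exp E2 \<and> \<bar>E2\<bar> \<le> 5 * k / real p powr \<sigma>"
  proof (intro exI conjI)
    show "(\<Sum>\<nu>. (gen_divisor (k/2) (p ^ \<nu>))^2 / real p powr (2 * real \<nu> * \<sigma>)) = exp (ln S)"
      unfolding fun_eq S_def[symmetric] using Spos by simp
    have lnS: "ln S = ln I + E1" using SE1 I1 by (simp add: ln_mult)
    have "0 \<le> ln I" using I1 by simp
    moreover have "ln I \<le> k*x"
    proof -
      have "ln I \<le> ln (exp (k*x))" using Iup I1 by (subst ln_le_cancel_iff) auto
      then show ?thesis by simp
    qed
    moreover have "\<delta> \<le> 4*k*x"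
    proof -
      have "x^2 \<le> x" using x0 x1 by (simp add: power2_eq_square mult_le_cancel_left1)
      then show ?thesis using k by (simp add: \<delta>_def)
    qed
    ultimately have "\<bar>ln S\<bar> \<le> 5*k*x" using E1b lnS by linarith
    also have "\<dots> = 5 * k / real p powr \<sigma>" by (simp add: x_def y_def)
    finally show "\<bar>ln S\<bar> \<le> 5 * k / real p powr \<sigma>" .
  qed
qed (simp)

end
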